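(* Let $A\in\mathbb{R}^{N\times N}$ be symmetric positive semidefinite with smallest eigenvalue $\omega\ge 0$, let $f:[0,T]\to\mathbb{R}^N$ be continuous, and let $y^0,v^0\in\mathbb{R}^N$ and $\varepsilon>0$. Let $y$ be the solution of $$y'(t)=-Ay(t)+f(t),\qquad y(0)=y^0,\qquad 0\le t\le T,$$ and let $\tilde y$ be the solution of the hyperbolic model (HM) approximation $$\tilde y'(t)+\varepsilon\tilde y''(t)=-A\tilde y(t)+f(t),\qquad \tilde y(0)=y^0,\ \tilde y'(0)=v^0,\qquad 0\le t\le T.$$ Let $\|\cdot\|$ be a vector norm on $\mathbb{R}^N$, also denoting the induced operator norm, and let $C$ be a constant such that $\|e^{-tA}\|\le Ce^{-\omega t}$ for all $t\ge 0$. Then the HM error $\tilde e(t)=y(t)-\tilde y(t)$ satisfies, for all $t\in[0,T]$, $$\|\tilde e(t)\|\le C\varepsilon\, t\,\varphi(-\omega t)\max_{s\in[0,t]}\|\tilde y''(s)\|,$$ that is, $\|\tilde e(t)\|\le C\varepsilon t\max_{s\in[0,t]}\|\tilde y''(s)\|$ if $\omega=0$ and $\|\tilde e(t)\|\le C\varepsilon\frac{1-e^{-\omega t}}{\omega}\max_{s\in[0,t]}\|\tilde y''(s)\|$ if $\omega>0$.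
   Context: $\varphi(z)=(e^z-1)/z$ for $z\in\mathbb{C}\setminus\{0\}$ and $\varphi(0)=1$. $e^{-tA}$ denotes the matrix exponential. For the spectral norm (induced by the Euclidean norm) one may take $C=1$. *)

theory Defs
  imports "HOL-Analysis.Analysis"
begin

primrec mat_pow :: "real^'n^'n \<Rightarrow> nat \<Rightarrow> real^'n^'n" where
  "mat_pow A 0 = mat 1"
| "mat_pow A (Suc k) = A ** mat_pow A k"

definition mat_exp :: "real^'n^'n \<Rightarrow> real^'n^'n" where
  "mat_exp A = (\<Sum>k. (1 / fact k) *\<^sub>R mat_pow A k)"

definition phi :: "real \<Rightarrow> real" where
  "phi z = (if z = 0 then 1 else (exp z - 1) / z)"

definition mat_eigenvalues :: "real^'n^'n \<Rightarrow> real set" where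
  "mat_eigenvalues A = {l. \<exists>x. x \<noteq> 0 \<and> A *v x = l *\<^sub>R x}"

definition is_vector_norm :: "(real^'n \<Rightarrow> real) \<Rightarrow> bool" where
  "is_vector_norm nrm \<longleftrightarrow>
     (\<forall>x. 0 \<le> nrm x) \<and> (\<forall>x. nrm x = 0 \<longleftrightarrow> x = 0) \<and>
     (\<forall>c x. nrm (c *\<^sub>R x) = \<bar>c\<bar> * nrm x) \<and>
     (\<forall>x y. nrm (x + y) \<le> nrm x + nrm y)"

definition induced_norm :: "(real^'n \<Rightarrow> real) \<Rightarrow> real^'n^'n \<Rightarrow> real" where
  "induced_norm nrm M = (SUP x\<in>{x. nrm x = 1}. nrm (M *v x))"

end

theory Submission imports Defs begin

typedef (overloaded) 'n sqm = "UNIV :: ((real^'n::finite) \<Rightarrow>\<^sub>L (real^'n)) set"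
  morphisms blin Sqm by auto

lemma Sqm_inv[simp]: "blin (Sqm x) = x" by (simp add: Sqm_inverse)
lemma blin_eq_iff: "x = y \<longleftrightarrow> blin x = blin y" by (simp add: blin_inject)

instantiation sqm :: (finite) real_normed_algebra_1
begin
definition "0 = (Sqm 0 :: 'a sqm)"
definition "1 = (Sqm id_blinfun :: 'a sqm)"
definition "x + y = Sqm (blin x + blin y)"
definition "x - y = Sqm (blin x - blin y)"
definition "- x = Sqm (- blin x)"
definition "scaleR r x = Sqm (r *\<^sub>R blin x)"
definition "x * y = Sqm (blin x o\<^sub>L blin y)"
definition "norm x = norm (blin x)"
definition "sgn x = inverse (norm x) *\<^sub>R (x::'a sqm)"
definition "dist x y = norm (x - (y::'a sqm))"
definition "(uniformity :: ('a sqm \<times> 'a sqm) filter) = (INF e\<in>{0 <..}. principal {(x, y). dist x y < e})"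
definition "open (S :: 'a sqm set) = (\<forall>x\<in>S. \<forall>\<^sub>F (x', y) in uniformity. x' = x \<longrightarrow> y \<in> S)"

lemma blin_simps[simp]: "blin 0 = 0" "blin 1 = id_blinfun" "blin (x + y) = blin x + blin y"
  "blin (x - y) = blin x - blin y" "blin (- x) = - blin x" "blin (r *\<^sub>R x) = r *\<^sub>R blin x"
  "blin (x * y) = blin x o\<^sub>L blin y" "norm x = norm (blin x)"
  by (simp_all add: zero_sqm_def one_sqm_def plus_sqm_def minus_sqm_def uminus_sqm_def
     scaleR_sqm_def times_sqm_def norm_sqm_def)

lemma dist_blin: "dist x y = dist (blin x) (blin y)"
  by (simp add: dist_sqm_def dist_norm)

lemma id_ne0: "(id_blinfun :: (real^'a) \<Rightarrow>\<^sub>L (real^'a)) \<noteq> 0"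
proof
  assume "(id_blinfun :: (real^'a) \<Rightarrow>\<^sub>L (real^'a)) = 0"
  then have "norm (id_blinfun :: (real^'a) \<Rightarrow>\<^sub>L (real^'a)) = 0" by simp
  then show False by simp
qed

instance
  by standard (insert id_ne0, auto simp: blin_eq_iff dist_sqm_def sgn_sqm_def uniformity_sqm_def open_sqm_def    norm_blinfun_compose blinfun.bilinear_simps intro!: blinfun_eqI norm_triangle_ineq    simp: scaleR_blinfun.rep_eq plus_blinfun.rep_eq algebra_simps blinfun.scaleR_right)
end

instance sqm :: (finite) banach
proof
  fix X :: "nat \<Rightarrow> 'a sqm"
  assume "Cauchy X"
  then have "Cauchy (\<lambda>n. blin (X n))" by (simp add: Cauchy_def dist_blin)
  then obtain L where L: "(\<lambda>n. blin (X n)) \<longlonglongrightarrow> L" using convergent_def Cauchy_convergent_iff by blast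
  have "X \<longlonglongrightarrow> Sqm L"
    using L unfolding tendsto_iff dist_blin by simp
  then show "convergent X" by (auto simp: convergent_def)
qed

definition ofM :: "real^'n^'n \<Rightarrow> 'n::finite sqm" where "ofM A = Sqm (Blinfun (\<lambda>x. A *v x))"
definition toM :: "'n::finite sqm \<Rightarrow> real^'n^'n" where "toM X = matrix (blinfun_apply (blin X))"

lemma blin_ofM[simp]: "blinfun_apply (blin (ofM A)) x = A *v x"
  by (simp add: ofM_def bounded_linear_Blinfun_apply matrix_vector_mul_bounded_linear)

lemma toM_apply: "toM X *v x = blinfun_apply (blin X) x"
  by (simp add: toM_def matrix_works blinfun.bounded_linear_right bounded_linear.linear)

lemma pow_apply: "blinfun_apply (blin (ofM A ^ k)) x = mat_pow A k *v x"
  by (induction k arbitrary: x) (simp_all add: matrix_vector_mul_assoc)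

lemma toM_pow: "toM (ofM A ^ k) = mat_pow A k"
  by (metis matrix_eq pow_apply toM_apply)

lemma ofM_scaleR: "ofM (r *\<^sub>R A) = r *\<^sub>R ofM A"
  by (simp add: blin_eq_iff blinfun_eqI scaleR_blinfun.rep_eq scaleR_matrix_vector_assoc)

lemma toM_scaleR: "toM (r *\<^sub>R x) = r *\<^sub>R toM x"
    by (metis (no_types) blin_simps(6) matrix_eq scaleR_blinfun.rep_eq scaleR_matrix_vector_assoc toM_apply)

lemma toM_bl: "bounded_linear (toM :: 'n::finite sqm \<Rightarrow> _)"
proof (rule bounded_linear_intro[where K="real CARD('n) * real CARD('n)"])
  fix x y :: "'n sqm" and r :: real
  show "toM (x + y) = toM x + toM y"
    by (metis (no_types) blin_simps(3) matrix_eq matrix_vector_mult_add_rdistrib plus_blinfun.rep_eq toM_apply)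
  show "toM (r *\<^sub>R x) = r *\<^sub>R toM x"
    by (metis (no_types) blin_simps(6) matrix_eq scaleR_blinfun.rep_eq scaleR_matrix_vector_assoc toM_apply)
  have c: "\<bar>toM x $ i $ j\<bar> \<le> norm x" for i j
  proof -
    have "toM x $ i $ j = (toM x *v axis j 1) $ i"
      by (simp add: matrix_vector_mult_def axis_def if_distrib cong: if_cong)
    also have "\<dots> = blinfun_apply (blin x) (axis j 1) $ i" by (simp add: toM_apply)
    finally have "\<bar>toM x $ i $ j\<bar> \<le> norm (blinfun_apply (blin x) (axis j 1))"
      by (metis component_le_norm_cart)
    also have "\<dots> \<le> norm (blin x) * norm (axis j (1::real))" by (rule norm_blinfun)
    finally show ?thesis by simp
  qed
  have "norm (toM x) \<le> (\<Sum>i\<in>UNIV. norm (toM x $ i))" by (simp add: norm_vec_def L2_set_le_sum)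
  also have "\<dots> \<le> (\<Sum>i\<in>(UNIV::'n set). \<Sum>j\<in>(UNIV::'n set). \<bar>toM x $ i $ j\<bar>)"
    by (intro sum_mono) (simp add: norm_le_l1_cart)
  also have "\<dots> \<le> (\<Sum>i\<in>(UNIV::'n set). \<Sum>j\<in>(UNIV::'n set). norm x)"
    by (intro sum_mono c)
  finally show "norm (toM x) \<le> norm x * (real CARD('n) * real CARD('n))" by (simp add: algebra_simps)
qed

lemma mat_exp_toM: "mat_exp A = toM (exp (ofM A))"
proof -
  have "(\<lambda>n. ofM A ^ n /\<^sub>R fact n) sums exp (ofM A)"
    by (simp add: exp_def summable_exp_generic summable_sums)
  from bounded_linear.sums[OF toM_bl this]
  have "(\<lambda>n. (1 / fact n) *\<^sub>R mat_pow A n) sums toM (exp (ofM A))"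
    by (simp add: toM_scaleR toM_pow divide_inverse_commute)
  then show ?thesis by (simp add: mat_exp_def sums_unique[symmetric])
qed

lemma mat_exp_apply: "mat_exp M *v x = blinfun_apply (blin (exp (ofM M))) x"
  by (simp add: mat_exp_toM toM_apply)


context
  fixes nrm :: "real^'n::finite \<Rightarrow> real"
  assumes nv: "is_vector_norm nrm"
begin

lemma nrm_nonneg: "0 \<le> nrm x" using nv by (simp add: is_vector_norm_def)
lemma nrm_eq0: "nrm x = 0 \<longleftrightarrow> x = 0" using nv by (simp add: is_vector_norm_def)
lemma nrm_scale: "nrm (c *\<^sub>R x) = \<bar>c\<bar> * nrm x" using nv by (simp add: is_vector_norm_def)
lemma nrm_tri: "nrm (x + y) \<le> nrm x + nrm y" using nv by (simp add: is_vector_norm_def)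
lemma nrm_0[simp]: "nrm 0 = 0" using nrm_eq0 by simp
lemma nrm_minus: "nrm (- x) = nrm x" using nrm_scale[of "-1" x] by simp
lemma nrm_diff: "nrm x - nrm y \<le> nrm (x - y)"
  using nrm_tri[of "x - y" y] by simp

lemma nrm_sum: "nrm (sum f S) \<le> (\<Sum>i\<in>S. nrm (f i))"
proof (induction S rule: infinite_finite_induct)
  case (insert x F)
  then show ?case using nrm_tri[of "f x" "sum f F"] by simp
qed simp_all

lemma nrm_upper: "\<exists>K>0. \<forall>x. nrm x \<le> K * norm x"
proof -
  define K where "K = 1 + (\<Sum>i\<in>UNIV. nrm (axis i (1::real) :: real^'n))"
  have K0: "K > 0" unfolding K_def using nrm_nonneg by (simp add: add_pos_nonneg sum_nonneg)
  have "nrm x \<le> K * norm x" for x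
  proof -
    have "x = (\<Sum>i\<in>UNIV. x $ i *\<^sub>R axis i 1)"
      using basis_expansion[of x] by (simp add: scalar_mult_eq_scaleR)
    then have "nrm x \<le> (\<Sum>i\<in>UNIV. nrm (x $ i *\<^sub>R axis i 1))"
      by (metis nrm_sum)
    also have "\<dots> = (\<Sum>i\<in>UNIV. \<bar>x $ i\<bar> * nrm (axis i 1))" by (simp add: nrm_scale)
    also have "\<dots> \<le> (\<Sum>i\<in>UNIV. norm x * nrm (axis i 1))"
      by (intro sum_mono mult_right_mono nrm_nonneg) (simp add: component_le_norm_cart)
    also have "\<dots> \<le> K * norm x" unfolding K_def by (simp add: sum_distrib_left algebra_simps)
    finally show ?thesis .
  qed
  with K0 show ?thesis by blast
qed

lemma nrm_cont: "continuous_on S nrm"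
proof -
  obtain K where K: "K > 0" "\<And>x. nrm x \<le> K * norm x" using nrm_upper by blast
  have "\<bar>nrm x - nrm y\<bar> \<le> K * dist x y" for x y
    using nrm_diff[of x y] nrm_diff[of y x] K(2)[of "x - y"] K(2)[of "y - x"]
    by (simp add: dist_norm norm_minus_commute)
  then have "K-lipschitz_on S nrm"
    by (intro lipschitz_onI) (use K in \<open>auto simp: dist_real_def\<close>)
  then show ?thesis by (rule lipschitz_on_continuous_on)
qed

lemma nrm_lower: "\<exists>k>0. \<forall>x. k * norm x \<le> nrm x"
proof -
  have "sphere (0::real^'n) 1 \<noteq> {}"
    by (metis empty_iff mem_sphere_0 norm_axis_1)
  then obtain x0 where x0: "x0 \<in> sphere 0 1" "\<And>y. y \<in> sphere 0 1 \<Longrightarrow> nrm x0 \<le> nrm y"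
    using continuous_attains_inf[OF compact_sphere _ nrm_cont] by blast
  have k: "nrm x0 > 0" using x0(1) nrm_eq0 nrm_nonneg by (metis less_eq_real_def mem_sphere_0 norm_zero zero_neq_one)
  have "nrm x0 * norm x \<le> nrm x" for x
  proof (cases "x = 0")
    case False
    then have "x /\<^sub>R norm x \<in> sphere 0 1" by simp
    then have "nrm x0 \<le> nrm (x /\<^sub>R norm x)" by (rule x0(2))
    also have "\<dots> = nrm x / norm x" by (simp add: nrm_scale divide_inverse_commute)
    finally show ?thesis using False by (simp add: field_simps)
  qed simp
  with k show ?thesis by blast
qed

lemma induced_bound: "nrm (M *v x) \<le> induced_norm nrm M * nrm x"
proof (cases "x = 0")
  case True then show ?thesis by simp
next
  case False
  obtain K where K: "K > 0" "\<And>x. nrm x \<le> K * norm x" using nrm_upper by blast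
  obtain k where k: "k > 0" "\<And>x. k * norm x \<le> nrm x" using nrm_lower by blast
  obtain B where B: "\<And>x. norm (M *v x) \<le> norm x * B"
    using bounded_linear.bounded[OF matrix_vector_mul_bounded_linear] by blast
  have bdd: "bdd_above ((\<lambda>x. nrm (M *v x)) ` {x. nrm x = 1})"
  proof (rule bdd_aboveI2)
    fix v assume "v \<in> {x. nrm x = 1}"
    then have "norm v \<le> 1 / k" using k(2)[of v] k(1) by (simp add: field_simps)
    have "nrm (M *v v) \<le> K * (norm v * B)" using K(2)[of "M *v v"] B[of v] K(1)
      by (meson mult_left_mono less_imp_le order_trans)
    also have "\<dots> \<le> K * (1 / k * \<bar>B\<bar>)"
    proof (rule mult_left_mono)
      have "norm v * B \<le> norm v * \<bar>B\<bar>" by (simp add: mult_left_mono)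
      also have "\<dots> \<le> 1 / k * \<bar>B\<bar>" using \<open>norm v \<le> 1 / k\<close> using mult_right_mono[OF \<open>norm v \<le> 1 / k\<close> abs_ge_zero[of B]] by simp
      finally show "norm v * B \<le> 1 / k * \<bar>B\<bar>" .
    qed (use K(1) in simp)
    finally show "nrm (M *v v) \<le> K * (1 / k * \<bar>B\<bar>)" .
  qed
  let ?u = "x /\<^sub>R nrm x"
  have nx: "nrm x > 0" using False nrm_eq0 nrm_nonneg by (metis less_eq_real_def)
  have u1: "nrm ?u = 1" using nx by (simp add: nrm_scale)
  have "nrm (M *v ?u) \<le> induced_norm nrm M"
    unfolding induced_norm_def using u1 bdd by (intro cSUP_upper) auto
  moreover have "M *v x = nrm x *\<^sub>R (M *v ?u)" using nx
    by (simp add: scaleR_matrix_vector_assoc[symmetric] matrix_vector_mult_scaleR)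
  ultimately show ?thesis using nx by (simp add: nrm_scale mult.commute)
qed

lemma induced_nonneg: "0 \<le> induced_norm nrm M"
proof -
  let ?e = "axis undefined (1::real) :: real^'n"
  have "?e \<noteq> 0" by simp
  then have p: "nrm ?e > 0" using nrm_eq0 nrm_nonneg by (metis less_eq_real_def)
  have "0 \<le> nrm (M *v ?e)" by (rule nrm_nonneg)
  also have "\<dots> \<le> induced_norm nrm M * nrm ?e" by (rule induced_bound)
  finally show ?thesis using p by (simp add: zero_le_mult_iff)
qed

lemma support: "\<exists>a. a \<bullet> v = nrm v \<and> (\<forall>w. a \<bullet> w \<le> nrm w)"
proof (cases "v = 0")
  case True
  then show ?thesis by (intro exI[of _ 0]) (simp add: nrm_nonneg)
next
  case False
  have nv0: "nrm v > 0" using False nrm_eq0 nrm_nonneg by (metis less_eq_real_def)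
  define S where "S = {z. nrm (v - z) < nrm v}"
  have cS: "convex S" unfolding S_def convex_def
  proof (intro ballI allI impI)
    fix x y :: "real^'n" and u w :: real
    assume h0: "x \<in> {z. nrm (v - z) < nrm v}" "y \<in> {z. nrm (v - z) < nrm v}"
      and h1: "0 \<le> u" "0 \<le> w" "u + w = 1"
    from h0 h1 have h: "nrm (v - x) < nrm v" "nrm (v - y) < nrm v" "0 \<le> u" "0 \<le> w" "u + w = 1" by auto
    have "v - (u *\<^sub>R x + w *\<^sub>R y) = u *\<^sub>R (v - x) + w *\<^sub>R (v - y)"
      using h(5) by (simp add: algebra_simps flip: scaleR_add_left)
    then have "nrm (v - (u *\<^sub>R x + w *\<^sub>R y)) \<le> u * nrm (v - x) + w * nrm (v - y)"
      using nrm_tri[of "u *\<^sub>R (v - x)" "w *\<^sub>R (v - y)"] h(3,4) by (simp add: nrm_scale)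
    also have "\<dots> < nrm v"
    proof (cases "u = 0")
      case True then show ?thesis using h by simp
    next
      case False
      then have "u * nrm (v - x) < u * nrm v" using h by simp
      moreover have "w * nrm (v - y) \<le> w * nrm v" using h by (simp add: mult_left_mono)
      moreover have "u * nrm v + w * nrm v = nrm v" using h(5) by (metis distrib_right mult_1)
      ultimately show ?thesis by linarith
    qed
    finally show "u *\<^sub>R x + w *\<^sub>R y \<in> {z. nrm (v - z) < nrm v}" by simp
  qed
  have "0 \<notin> S" unfolding S_def by simp
  then obtain a where a: "a \<noteq> 0" "\<And>x. x \<in> S \<Longrightarrow> 0 \<le> a \<bullet> x"
    using separating_hyperplane_set_0[OF cS] by blast
  have key: "a \<bullet> x \<le> a \<bullet> v" if "nrm x < nrm v" for x
    using a(2)[of "v - x"] that unfolding S_def by (simp add: inner_diff_right)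
  have na: "nrm a > 0" using a(1) nrm_eq0 nrm_nonneg by (metis less_eq_real_def)
  define r where "r = nrm v / (2 * nrm a)"
  have r0: "r > 0" using na nv0 by (simp add: r_def)
  have "nrm (r *\<^sub>R a) < nrm v" using r0 na nv0 by (simp add: nrm_scale r_def)
  then have "a \<bullet> (r *\<^sub>R a) \<le> a \<bullet> v" by (rule key)
  then have "r * (a \<bullet> a) \<le> a \<bullet> v" by simp
  moreover have "a \<bullet> a > 0" using a(1) by simp
  ultimately have av: "a \<bullet> v > 0" using r0 by (meson mult_pos_pos order_less_le_trans)
  have W: "nrm v * (a \<bullet> w) \<le> nrm w * (a \<bullet> v)" for w
  proof (cases "w = 0")
    case True then show ?thesis by simp
  next
    case False
    have nw: "nrm w > 0" using False nrm_eq0 nrm_nonneg by (metis less_eq_real_def)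
    have "(nrm v / nrm w) * (a \<bullet> w) \<le> a \<bullet> v"
    proof (rule field_le_mult_one_interval)
      fix z :: real assume z: "0 < z" "z < 1"
      have "nrm ((z * (nrm v / nrm w)) *\<^sub>R w) = z * nrm v" using z nw nv0 by (simp add: nrm_scale)
      also have "\<dots> < nrm v" using z nv0 by simp
      finally have "a \<bullet> ((z * (nrm v / nrm w)) *\<^sub>R w) \<le> a \<bullet> v" by (rule key)
      then show "z * (nrm v / nrm w * (a \<bullet> w)) \<le> a \<bullet> v" by (simp add: mult.assoc)
    qed
    then show ?thesis using nw by (simp add: field_simps)
  qed
  show ?thesis
  proof (intro exI[of _ "(nrm v / (a \<bullet> v)) *\<^sub>R a"] conjI allI)
    show "(nrm v / (a \<bullet> v)) *\<^sub>R a \<bullet> v = nrm v" using av by simp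
    fix w
    show "(nrm v / (a \<bullet> v)) *\<^sub>R a \<bullet> w \<le> nrm w"
      using W[of w] av by (simp add: field_simps)
  qed
qed

end
lemma bl_blin: "bounded_linear (blin :: 'n::finite sqm \<Rightarrow> _)"
  by (rule bounded_linear_intro[where K=1]) simp_all

lemma E_deriv: "((\<lambda>s. exp ((s - t) *\<^sub>R (B::'n::finite sqm))) has_vector_derivative exp ((s - t) *\<^sub>R B) * B) (at s within S)"
proof -
  have 1: "((\<lambda>s. s - t) has_vector_derivative 1) (at s within S)"
    by (auto intro!: derivative_eq_intros simp: has_real_derivative_iff_has_vector_derivative[symmetric])
  have 2: "((\<lambda>u. exp (u *\<^sub>R B)) has_vector_derivative exp ((s - t) *\<^sub>R B) * B) (at ((\<lambda>s. s - t) s) within (\<lambda>s. s - t) ` S)"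
    by (rule exp_scaleR_has_vector_derivative_right)
  from vector_diff_chain_within[OF 1 2] show ?thesis by (simp add: o_def)
qed

theorem proposition1:
  fixes A :: "real^'n^'n" and \<omega> T \<epsilon> C :: real
    and f y yt yt' yt'' :: "real \<Rightarrow> real^'n"
    and y0 v0 :: "real^'n" and nrm :: "real^'n \<Rightarrow> real"
  assumes symA: "transpose A = A"
    and psdA: "\<forall>x. 0 \<le> x \<bullet> (A *v x)"
    and omega_eig: "\<omega> \<in> mat_eigenvalues A"
    and omega_min: "\<forall>l\<in>mat_eigenvalues A. \<omega> \<le> l"
    and f_cont: "continuous_on {0..T} f"
    and eps: "\<epsilon> > 0"
    and y_ode: "\<forall>t\<in>{0..T}. (y has_vector_derivative (- (A *v y t) + f t)) (at t within {0..T})"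
    and y_init: "y 0 = y0"
    and yt_d1: "\<forall>t\<in>{0..T}. (yt has_vector_derivative yt' t) (at t within {0..T})"
    and yt_d2: "\<forall>t\<in>{0..T}. (yt' has_vector_derivative yt'' t) (at t within {0..T})"
    and yt_ode: "\<forall>t\<in>{0..T}. yt' t + \<epsilon> *\<^sub>R yt'' t = - (A *v yt t) + f t"
    and yt_init: "yt 0 = y0" "yt' 0 = v0"
    and nrm: "is_vector_norm nrm"
    and C_bound: "\<forall>t\<ge>0. induced_norm nrm (mat_exp ((- t) *\<^sub>R A)) \<le> C * exp (- \<omega> * t)"
  shows "\<forall>t\<in>{0..T}. nrm (y t - yt t)
           \<le> C * \<epsilon> * t * phi (- \<omega> * t) * (SUP s\<in>{0..t}. nrm (yt'' s))"
proof
  fix t assume t: "t \<in> {0..T}"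
  have C0: "0 \<le> C" using C_bound induced_nonneg[OF nrm, of "mat_exp ((- 0) *\<^sub>R A)"] by force
  have ytc: "continuous_on {0..T} yt" using yt_d1 by (intro continuous_on_vector_derivative) auto
  have yt'c: "continuous_on {0..T} yt'" using yt_d2 by (intro continuous_on_vector_derivative) auto
  have yt''_eq: "yt'' s = (1 / \<epsilon>) *\<^sub>R (- (A *v yt s) + f s - yt' s)" if "s \<in> {0..T}" for s
  proof -
    have "\<epsilon> *\<^sub>R yt'' s = - (A *v yt s) + f s - yt' s" using yt_ode that by (metis add_diff_cancel_left')
    then have "(1 / \<epsilon>) *\<^sub>R (\<epsilon> *\<^sub>R yt'' s) = (1 / \<epsilon>) *\<^sub>R (- (A *v yt s) + f s - yt' s)" by simp
    then show ?thesis using eps by simp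
  qed
  have Ac: "continuous_on {0..T} (\<lambda>s. A *v yt s)"
    by (rule bounded_linear.continuous_on[OF matrix_vector_mul_bounded_linear ytc])
  have "continuous_on {0..T} (\<lambda>s. (1 / \<epsilon>) *\<^sub>R (- (A *v yt s) + f s - yt' s))"
    by (intro continuous_intros Ac f_cont yt'c)
  then have yt''c: "continuous_on {0..T} yt''" by (rule continuous_on_eq) (simp add: yt''_eq)
  have sub: "{0..t} \<subseteq> {0..T}" using t by auto
  have nc: "continuous_on {0..t} (\<lambda>s. nrm (yt'' s))"
    by (rule continuous_on_compose2[OF nrm_cont[OF nrm] continuous_on_subset[OF yt''c sub]]) auto
  have bdd: "bdd_above ((\<lambda>s. nrm (yt'' s)) ` {0..t})"
    by (intro bounded_imp_bdd_above compact_imp_bounded compact_continuous_image nc compact_Icc)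
  define M where "M = (SUP s\<in>{0..t}. nrm (yt'' s))"
  have leM: "nrm (yt'' s) \<le> M" if "s \<in> {0..t}" for s
    unfolding M_def using bdd that by (rule cSUP_upper2) auto
  have M0: "0 \<le> M" using leM[of 0] t nrm_nonneg[OF nrm, of "yt'' 0"] by auto
  define e where "e s = y s - yt s" for s
  have e0: "e 0 = 0" by (simp add: e_def y_init yt_init)
  show "nrm (y t - yt t) \<le> C * \<epsilon> * t * phi (- \<omega> * t) * (SUP s\<in>{0..t}. nrm (yt'' s))"
  proof (cases "t = 0")
    case True
    then show ?thesis using e0 by (simp add: e_def nrm_0[OF nrm])
  next
    case False
    then have tpos: "t > 0" using t by auto
    define B where "B = (ofM A :: 'n sqm)"
    define E where "E s = exp ((s - t) *\<^sub>R B)" for s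
    define h where "h s = blinfun_apply (blin (E s)) (e s)" for s
    have e_d: "(e has_vector_derivative (- (A *v e s) + \<epsilon> *\<^sub>R yt'' s)) (at s within {0..t})"
      if "s \<in> {0..t}" for s
    proof -
      have sT: "s \<in> {0..T}" using that sub by auto
      have "(e has_vector_derivative ((- (A *v y s) + f s) - yt' s)) (at s within {0..T})"
        unfolding e_def[abs_def] using y_ode yt_d1 sT by (intro derivative_intros) auto
      moreover have "(- (A *v y s) + f s) - yt' s = - (A *v e s) + \<epsilon> *\<^sub>R yt'' s"
      proof -
        have y1: "yt' s = - (A *v yt s) + f s - \<epsilon> *\<^sub>R yt'' s" using yt_ode sT by (metis add_diff_cancel_right')
        have ae: "A *v e s = A *v y s - A *v yt s" by (simp add: e_def matrix_vector_mult_diff_distrib)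
        show ?thesis unfolding y1 ae by (simp add: algebra_simps)
      qed
      ultimately show ?thesis using has_vector_derivative_within_subset sub by metis
    qed
    have h_d: "(h has_vector_derivative blinfun_apply (blin (E s)) (\<epsilon> *\<^sub>R yt'' s)) (at s within {0..t})"
      if "s \<in> {0..t}" for s
    proof -
      have Ed: "((\<lambda>s. blin (E s)) has_vector_derivative blin (E s * B)) (at s within {0..t})"
        unfolding E_def by (rule bounded_linear.has_vector_derivative[OF bl_blin E_deriv])
      have "(h has_vector_derivative (blinfun_apply (blin (E s)) (- (A *v e s) + \<epsilon> *\<^sub>R yt'' s)
              + blinfun_apply (blin (E s * B)) (e s))) (at s within {0..t})"
        unfolding h_def by (rule blinfun.has_vector_derivative[OF Ed e_d[OF that]])
      moreover have "blinfun_apply (blin (E s)) (- (A *v e s) + \<epsilon> *\<^sub>R yt'' s)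
              + blinfun_apply (blin (E s * B)) (e s) = blinfun_apply (blin (E s)) (\<epsilon> *\<^sub>R yt'' s)"
        by (simp add: B_def blinfun.bilinear_simps)
      ultimately show ?thesis by simp
    qed
    obtain a where a: "a \<bullet> e t = nrm (e t)" "\<And>w. a \<bullet> w \<le> nrm w" using support[OF nrm, of "e t"] by blast
    define g where "g s = exp (- \<omega> * (t - s))" for s
    define G where "G s = (if \<omega> = 0 then s else exp (- \<omega> * (t - s)) / \<omega>)" for s
    have G_d: "(G has_real_derivative g s) (at s within {0..t})" for s
      unfolding G_def g_def by (cases "\<omega> = 0") (auto intro!: derivative_eq_intros)
    define \<phi> where "\<phi> s = a \<bullet> h s - C * \<epsilon> * M * G s" for s
    define \<phi>' where "\<phi>' s = a \<bullet> blinfun_apply (blin (E s)) (\<epsilon> *\<^sub>R yt'' s) - C * \<epsilon> * M * g s" for s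
    have phid: "(\<phi> has_derivative (\<lambda>x. x * \<phi>' s)) (at s within {0..t})" if "s \<in> {0..t}" for s
    proof -
      have hd': "((\<lambda>s. a \<bullet> h s) has_real_derivative a \<bullet> blinfun_apply (blin (E s)) (\<epsilon> *\<^sub>R yt'' s)) (at s within {0..t})"
        using bounded_linear.has_vector_derivative[OF bounded_linear_inner_right h_d[OF that]]
        by (simp add: has_real_derivative_iff_has_vector_derivative)
      have "(\<phi> has_real_derivative \<phi>' s) (at s within {0..t})"
        unfolding \<phi>_def[abs_def] \<phi>'_def by (intro derivative_intros hd' DERIV_cmult G_d)
      then show ?thesis by (simp add: has_field_derivative_def mult_commute_abs)
    qed
    obtain \<xi> where \<xi>: "\<xi> \<in> {0<..<t}" "\<phi> t - \<phi> 0 = t * \<phi>' \<xi>"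
      using mvt_simple[OF tpos, of \<phi> "\<lambda>s x. x * \<phi>' s"] phid by auto
    have \<xi>t: "\<xi> \<in> {0..t}" using \<xi>(1) by auto
    have EQ: "blinfun_apply (blin (E \<xi>)) (\<epsilon> *\<^sub>R yt'' \<xi>) = mat_exp ((- (t - \<xi>)) *\<^sub>R A) *v (\<epsilon> *\<^sub>R yt'' \<xi>)"
      by (simp add: mat_exp_apply E_def B_def ofM_scaleR)
    have "nrm (mat_exp ((- (t - \<xi>)) *\<^sub>R A) *v (\<epsilon> *\<^sub>R yt'' \<xi>)) \<le> induced_norm nrm (mat_exp ((- (t - \<xi>)) *\<^sub>R A)) * nrm (\<epsilon> *\<^sub>R yt'' \<xi>)"
      by (rule induced_bound[OF nrm])
    also have "\<dots> \<le> C * g \<xi> * (\<epsilon> * M)"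
    proof (rule mult_mono)
      show "induced_norm nrm (mat_exp ((- (t - \<xi>)) *\<^sub>R A)) \<le> C * g \<xi>"
        using C_bound[rule_format, of "t - \<xi>"] \<xi>(1) by (simp add: g_def)
      show "nrm (\<epsilon> *\<^sub>R yt'' \<xi>) \<le> \<epsilon> * M"
        using leM[OF \<xi>t] eps by (simp add: nrm_scale[OF nrm])
    qed (use C0 g_def M0 eps nrm_nonneg[OF nrm] in auto)
    finally have Y: "nrm (mat_exp ((- (t - \<xi>)) *\<^sub>R A) *v (\<epsilon> *\<^sub>R yt'' \<xi>)) \<le> C * g \<xi> * (\<epsilon> * M)" .
    have X: "a \<bullet> blinfun_apply (blin (E \<xi>)) (\<epsilon> *\<^sub>R yt'' \<xi>) \<le> C * g \<xi> * (\<epsilon> * M)"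
      using a(2)[of "blinfun_apply (blin (E \<xi>)) (\<epsilon> *\<^sub>R yt'' \<xi>)"] Y unfolding EQ by (rule order_trans)
    have "C * g \<xi> * (\<epsilon> * M) = C * \<epsilon> * M * g \<xi>" by (simp only: ac_simps)
    with X have "\<phi>' \<xi> \<le> 0" unfolding \<phi>'_def by linarith
    then have "\<phi> t - \<phi> 0 \<le> 0" using \<xi>(2) tpos by (simp add: mult_nonneg_nonpos)
    moreover have "h t = e t" by (simp add: h_def E_def)
    moreover have "h 0 = 0" by (simp add: h_def e0)
    ultimately have "nrm (e t) \<le> C * \<epsilon> * M * (G t - G 0)"
      using a(1) by (simp add: \<phi>_def algebra_simps)
    moreover have "G t - G 0 = t * phi (- \<omega> * t)"
      using tpos by (simp add: G_def phi_def field_simps)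
    ultimately show ?thesis by (simp add: e_def M_def mult_ac)
  qed
qed

end
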